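(* Let $M,N$ be matroids on a common set $E$ satisfying $\mathsf{cond}^+(M,N)$. Let $e\in E$, let $W\subseteq E\setminus\{e\}$ be an $(M/e,N/e)$-wave, and let $B\subseteq W$ be a base of $(M/e)\upharpoonright W$ that is independent in $(N/e).W$. Then $B\in B(M/e,N/e,W)$; that is, $B$ is also spanning in $N.W$.
   Context: Matroids are possibly infinite. $M^*$ is the dual, $M\upharpoonright X$ restriction, $M/X:=(M^*\upharpoonright(E\setminus X))^*$, $M/e:=M/\{e\}$, $M.X:=M/(E\setminus X)$. A loop is an element $e$ with $\{e\}$ dependent; $r(K)=0$ means the empty set is a base of $K$. $W$ is an $(M,N)$-wave if $M\upharpoonright W$ has a base independent in $N.W$; the union of all $(M,N)$-waves is a wave, denoted $W(M,N)$. $\mathsf{cond}^+(M,N)$: $W(M,N)$ consists of $M$-loops and $r(N.W(M,N))=0$. $B(M,N,X)$ denotes the set of common bases of $M\upharpoonright X$ and $N.X$. *)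

theory Defs
  imports Main
begin

type_synonym 'a matroid = "'a set \<times> ('a set \<Rightarrow> bool)"

definition ground :: "'a matroid \<Rightarrow> 'a set" where
  "ground M = fst M"

definition indep :: "'a matroid \<Rightarrow> 'a set \<Rightarrow> bool" where
  "indep M X = snd M X"

definition basis :: "'a matroid \<Rightarrow> 'a set \<Rightarrow> bool" where
  "basis M B \<longleftrightarrow> indep M B \<and> (\<forall>I. indep M I \<and> B \<subseteq> I \<longrightarrow> I = B)"

text \<open>Independence axioms for infinite matroids (Bruhn, Diestel, Kriesell, Pendavingh, Wollan):
(I1), (I2), (I3) and (IM).\<close>
definition matroid :: "'a matroid \<Rightarrow> bool" where
  "matroid M \<longleftrightarrow>
     (\<forall>I. indep M I \<longrightarrow> I \<subseteq> ground M) \<and>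
     indep M {} \<and>
     (\<forall>I J. indep M J \<and> I \<subseteq> J \<longrightarrow> indep M I) \<and>
     (\<forall>I J. indep M I \<and> \<not> basis M I \<and> basis M J \<longrightarrow>
        (\<exists>x \<in> J - I. indep M (insert x I))) \<and>
     (\<forall>I X. indep M I \<and> I \<subseteq> X \<and> X \<subseteq> ground M \<longrightarrow>
        (\<exists>J. indep M J \<and> I \<subseteq> J \<and> J \<subseteq> X \<and>
              (\<forall>K. indep M K \<and> J \<subseteq> K \<and> K \<subseteq> X \<longrightarrow> K = J)))"

text \<open>Dual: the bases of \<open>M\<^sup>*\<close> are the complements of bases of \<open>M\<close>.\<close>
definition dual :: "'a matroid \<Rightarrow> 'a matroid" where
  "dual M = (ground M, \<lambda>X. X \<subseteq> ground M \<and> (\<exists>B. basis M B \<and> X \<inter> B = {}))"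

definition restrict :: "'a matroid \<Rightarrow> 'a set \<Rightarrow> 'a matroid" where
  "restrict M X = (X \<inter> ground M, \<lambda>I. indep M I \<and> I \<subseteq> X)"

definition contract :: "'a matroid \<Rightarrow> 'a set \<Rightarrow> 'a matroid" where
  "contract M X = dual (restrict (dual M) (ground M - X))"

definition contract_to :: "'a matroid \<Rightarrow> 'a set \<Rightarrow> 'a matroid" where
  "contract_to M X = contract M (ground M - X)"

definition loop :: "'a matroid \<Rightarrow> 'a \<Rightarrow> bool" where
  "loop M e \<longleftrightarrow> e \<in> ground M \<and> \<not> indep M {e}"

definition wave :: "'a matroid \<Rightarrow> 'a matroid \<Rightarrow> 'a set \<Rightarrow> bool" where
  "wave M N W \<longleftrightarrow> W \<subseteq> ground M \<and>
     (\<exists>B. basis (restrict M W) B \<and> indep (contract_to N W) B)"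

definition wave_union :: "'a matroid \<Rightarrow> 'a matroid \<Rightarrow> 'a set" where
  "wave_union M N = \<Union> {W. wave M N W}"

text \<open>\<open>cond\<^sup>+(M,N)\<close>: \<open>W(M,N)\<close> consists of \<open>M\<close>-loops and \<open>r(N.W(M,N)) = 0\<close>,
i.e. the empty set is a base of \<open>N.W(M,N)\<close>.\<close>
definition cond_plus :: "'a matroid \<Rightarrow> 'a matroid \<Rightarrow> bool" where
  "cond_plus M N \<longleftrightarrow> (\<forall>x \<in> wave_union M N. loop M x) \<and>
     basis (contract_to N (wave_union M N)) {}"

definition common_bases :: "'a matroid \<Rightarrow> 'a matroid \<Rightarrow> 'a set \<Rightarrow> 'a set set" where
  "common_bases M N X = {B. basis (restrict M X) B \<and> basis (contract_to N X) B}"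

end

theory Submission
  imports Defs
begin

definition mb :: "'a matroid \<Rightarrow> 'a set \<Rightarrow> 'a set \<Rightarrow> bool" where
  "mb M X J \<longleftrightarrow> indep M J \<and> J \<subseteq> X \<and> (\<forall>K. indep M K \<and> J \<subseteq> K \<and> K \<subseteq> X \<longrightarrow> K = J)"

definition inc :: "'a matroid \<Rightarrow> 'a set \<Rightarrow> 'a \<Rightarrow> bool" where
  "inc M I w \<longleftrightarrow> w \<in> I \<or> \<not> indep M (insert w I)"

lemma mb_ind: "mb M X J \<Longrightarrow> indep M J" unfolding mb_def by blast
lemma mb_sub: "mb M X J \<Longrightarrow> J \<subseteq> X" unfolding mb_def by blast

context fixes M :: "'a matroid" assumes mM: "matroid M" begin

lemma m_conj: "(\<forall>I. indep M I \<longrightarrow> I \<subseteq> ground M)" "indep M {}"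
  "(\<forall>I J. indep M J \<and> I \<subseteq> J \<longrightarrow> indep M I)"
  "(\<forall>I J. indep M I \<and> \<not> basis M I \<and> basis M J \<longrightarrow> (\<exists>x \<in> J - I. indep M (insert x I)))"
  "(\<forall>I X. indep M I \<and> I \<subseteq> X \<and> X \<subseteq> ground M \<longrightarrow>
        (\<exists>J. indep M J \<and> I \<subseteq> J \<and> J \<subseteq> X \<and>
              (\<forall>K. indep M K \<and> J \<subseteq> K \<and> K \<subseteq> X \<longrightarrow> K = J)))"
  using mM unfolding matroid_def by simp_all

lemma m_sub: "indep M I \<Longrightarrow> I \<subseteq> ground M"
  using m_conj(1) by simp
lemma m_empty: "indep M {}"
  using m_conj(2) .
lemma m_mono: "indep M J \<Longrightarrow> I \<subseteq> J \<Longrightarrow> indep M I"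
  using m_conj(3) by metis
lemma m_aug: "indep M I \<Longrightarrow> \<not> basis M I \<Longrightarrow> basis M J \<Longrightarrow> \<exists>x\<in>J - I. indep M (insert x I)"
  using m_conj(4) by metis
lemma m_max: "indep M I \<Longrightarrow> I \<subseteq> X \<Longrightarrow> X \<subseteq> ground M \<Longrightarrow> \<exists>J. mb M X J \<and> I \<subseteq> J"
proof -
  assume a: "indep M I" "I \<subseteq> X" "X \<subseteq> ground M"
  then obtain J where "indep M J \<and> I \<subseteq> J \<and> J \<subseteq> X \<and> (\<forall>K. indep M K \<and> J \<subseteq> K \<and> K \<subseteq> X \<longrightarrow> K = J)"
    using m_conj(5) by meson
  then show ?thesis unfolding mb_def by blast
qed

lemma mbI: "indep M J \<Longrightarrow> J \<subseteq> X \<Longrightarrow> (\<And>x. x\<in>X \<Longrightarrow> x \<notin> J \<Longrightarrow> \<not> indep M (insert x J)) \<Longrightarrow> mb M X J"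
proof -
  assume a: "indep M J" "J \<subseteq> X" "\<And>x. x\<in>X \<Longrightarrow> x \<notin> J \<Longrightarrow> \<not> indep M (insert x J)"
  have "K = J" if k: "indep M K \<and> J \<subseteq> K \<and> K \<subseteq> X" for K
  proof (rule ccontr)
    assume "K \<noteq> J" then obtain x where "x \<in> K" "x \<notin> J" using k by blast
    then have "indep M (insert x J)" using k m_mono[of K "insert x J"] by blast
    then show False using a(3)[of x] \<open>x\<in>K\<close> \<open>x\<notin>J\<close> k by blast
  qed
  then show ?thesis unfolding mb_def using a by blast
qed

lemma mbD: "mb M X J \<Longrightarrow> x \<in> X \<Longrightarrow> x \<notin> J \<Longrightarrow> \<not> indep M (insert x J)"
  unfolding mb_def by blast

lemma basis_mb: "basis M B \<longleftrightarrow> mb M (ground M) B"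
  unfolding basis_def mb_def using m_sub by (meson order_refl)

lemma span: assumes "indep M S" "basis M B" "\<And>x. x\<in>B \<Longrightarrow> x \<notin> S \<Longrightarrow> \<not> indep M (insert x S)"
  shows "basis M S"
  using m_aug[OF assms(1) _ assms(2)] assms(3) by blast

lemma inc_trans:
  assumes T: "indep M T" and K: "\<And>k. k\<in>K \<Longrightarrow> inc M T k" and K0: "K0 \<subseteq> K" "indep M K0"
    and i: "inc M K0 i"
  shows "inc M T i"
proof (rule ccontr)
  assume ni: "\<not> inc M T i"
  then have iT: "i \<notin> T" and Ti: "indep M (insert i T)" unfolding inc_def by auto
  have iK: "i \<notin> K" using K ni by blast
  then have iK0: "i \<notin> K0" and K0i: "\<not> indep M (insert i K0)" using i K0 unfolding inc_def by auto
  define Z where "Z = T \<union> K \<union> {i}"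
  have s1: "insert i T \<subseteq> insert i T \<union> (ground M - Z)" by blast
  have s2: "insert i T \<union> (ground M - Z) \<subseteq> ground M" using m_sub[OF Ti] by blast
  obtain P where P: "mb M (insert i T \<union> (ground M - Z)) P" "insert i T \<subseteq> P"
    using m_max[OF Ti s1 s2] by blast
  have Pind: "indep M P" using P unfolding mb_def by blast
  have Psub: "P \<subseteq> insert i T \<union> (ground M - Z)" using P unfolding mb_def by blast
  have Pb: "basis M P"
    unfolding basis_mb
  proof (rule mbI[OF Pind])
    show "P \<subseteq> ground M" using m_sub[OF Pind] .
    fix x assume x: "x \<in> ground M" "x \<notin> P"
    show "\<not> indep M (insert x P)"
    proof (cases "x \<in> Z")
      case False then show ?thesis using mbD[OF P(1)] x by blast
    next
      case True
      then have "x \<in> K - T" using x P(2) unfolding Z_def by blast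
      then have "\<not> indep M (insert x T)" using K unfolding inc_def by blast
      then show ?thesis using m_mono[of "insert x P" "insert x T"] P(2) by blast
    qed
  qed
  have s3: "K0 \<subseteq> K0 \<union> T \<union> (P - Z)" by blast
  have s4: "K0 \<union> T \<union> (P - Z) \<subseteq> ground M" using m_sub[OF K0(2)] m_sub[OF T] m_sub[OF Pind] by blast
  obtain Q where Q: "mb M (K0 \<union> T \<union> (P - Z)) Q" "K0 \<subseteq> Q"
    using m_max[OF K0(2) s3 s4] by blast
  have Qind: "indep M Q" using Q unfolding mb_def by blast
  have Qsub: "Q \<subseteq> K0 \<union> T \<union> (P - Z)" using Q unfolding mb_def by blast
  have Qb: "basis M Q"
  proof (rule span[OF Qind Pb])
    fix x assume x: "x \<in> P" "x \<notin> Q"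
    show "\<not> indep M (insert x Q)"
    proof (cases "x = i")
      case True then show ?thesis using K0i Q(2) m_mono[of "insert x Q" "insert i K0"] by blast
    next
      case False
      then have "x \<in> K0 \<union> T \<union> (P - Z)" using x Psub unfolding Z_def by blast
      then show ?thesis using mbD[OF Q(1)] x by blast
    qed
  qed
  define R where "R = P - {i}"
  have Rind: "indep M R" using m_mono[OF Pind] unfolding R_def by blast
  have Rnb: "\<not> basis M R"
  proof
    assume "basis M R"
    then have "P = R" using Pind unfolding basis_def R_def by blast
    then show False using P(2) unfolding R_def by blast
  qed
  obtain x where x: "x \<in> Q - R" "indep M (insert x R)" using m_aug[OF Rind Rnb Qb] by blast
  have TR: "T \<subseteq> R" using P(2) iT unfolding R_def by blast
  have "x \<in> K0" "x \<notin> T" using x Qsub TR unfolding R_def Z_def by blast+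
  then have "\<not> indep M (insert x T)" using K K0 unfolding inc_def by blast
  then show False using x(2) TR m_mono[of "insert x R" "insert x T"] by blast
qed


lemma rspan:
  assumes S: "indep M S" "S \<subseteq> Z" and P: "mb M Z P" and sp: "\<And>p. p\<in>P \<Longrightarrow> inc M S p"
  shows "mb M Z S"
proof (rule mbI[OF S])
  fix q assume q: "q \<in> Z" "q \<notin> S"
  have "inc M P q"
    using mbD[OF P q(1)] unfolding inc_def by blast
  then have "inc M S q" using inc_trans[OF S(1) sp _ mb_ind[OF P], of P] by blast
  then show "\<not> indep M (insert q S)" using q unfolding inc_def by blast
qed

definition Dc :: "'a \<Rightarrow> 'a set \<Rightarrow> 'a set" where
  "Dc z I = {x\<in>I. indep M (insert z (I - {x}))}"

lemma circ:
  assumes I: "indep M I" and z: "z \<notin> I" "\<not> indep M (insert z I)" and S: "S \<subseteq> I"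
    and D: "Dc z I \<subseteq> S"
  shows "\<not> indep M (insert z S)"
proof
  assume Sz: "indep M (insert z S)"
  have s1: "insert z S \<subseteq> insert z I" using S by blast
  have s2: "insert z I \<subseteq> ground M" using m_sub[OF Sz] m_sub[OF I] by blast
  obtain P where P: "mb M (insert z I) P" "insert z S \<subseteq> P" using m_max[OF Sz s1 s2] by blast
  have "P \<noteq> insert z I" using P z(2) mb_ind by blast
  then obtain x1 where x1: "x1 \<in> I" "x1 \<notin> P" using P mb_sub by blast
  have x1S: "x1 \<notin> S" using x1 P by blast
  define S' where "S' = I - {x1}"
  have S'i: "indep M S'" using m_mono[OF I] unfolding S'_def by blast
  have "\<not> mb M (insert z I) S'"
  proof
    assume "mb M (insert z I) S'"
    moreover have "indep M (insert x1 S')" using I x1 unfolding S'_def by (simp add: insert_absorb)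
    ultimately show False using mbD x1 unfolding S'_def by blast
  qed
  then obtain p where p: "p \<in> P" "\<not> inc M S' p"
    using rspan[OF S'i _ P(1)] unfolding S'_def by blast
  have "p = z" using p x1 P(1) mb_sub[OF P(1)] unfolding inc_def S'_def by blast
  then have "indep M (insert z (I - {x1}))" using p unfolding inc_def S'_def by blast
  then have "x1 \<in> Dc z I" using x1 unfolding Dc_def by blast
  then show False using D x1S by blast
qed

lemma circ_triv:
  assumes S: "S \<subseteq> I" and d: "\<not> indep M (insert z S)"
  shows "Dc z I \<subseteq> S"
proof
  fix x assume x: "x \<in> Dc z I"
  show "x \<in> S"
  proof (rule ccontr)
    assume "x \<notin> S"
    then have "insert z S \<subseteq> insert z (I - {x})" using S by blast
    then show False using x d m_mono unfolding Dc_def by blast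
  qed
qed

lemma Dc_sub: "Dc z I \<subseteq> I" unfolding Dc_def by blast

lemma deq:
  assumes I1: "indep M I1" "z \<notin> I1" "\<not> indep M (insert z I1)"
    and I2: "indep M I2" "z \<notin> I2" "\<not> indep M (insert z I2)"
    and sub: "Dc z I1 \<subseteq> I2"
  shows "Dc z I1 = Dc z I2"
proof -
  have d1: "\<not> indep M (insert z (Dc z I1))" using circ[OF I1 Dc_sub] by blast
  have a: "Dc z I2 \<subseteq> Dc z I1" using circ_triv[OF sub d1] .
  have d2: "\<not> indep M (insert z (Dc z I2))" using circ[OF I2 Dc_sub] by blast
  have "Dc z I2 \<subseteq> I1" using a Dc_sub by blast
  then have "Dc z I1 \<subseteq> Dc z I2" using circ_triv d2 by blast
  then show ?thesis using a by blast
qed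

lemma tri:
  fixes k :: nat and b z :: "nat \<Rightarrow> 'a"
  shows "indep M I \<Longrightarrow>
   (\<forall>i<k. b i \<in> I \<and> z i \<notin> I \<and> \<not> indep M (insert (z i) I) \<and> indep M (insert (z i) (I - {b i}))) \<Longrightarrow>
   (\<forall>i<k. \<forall>j<i. \<not> indep M (insert (z i) (I - {b j}))) \<Longrightarrow>
   indep M ((I - b ` {..<k}) \<union> z ` {..<k}) \<and> (\<forall>w. inc M I w \<longrightarrow> inc M ((I - b ` {..<k}) \<union> z ` {..<k}) w)"
proof (induction k arbitrary: I b z)
  case 0
  then show ?case by simp
next
  case (Suc k)
  note I = Suc.prems(1) and H = Suc.prems(2) and T = Suc.prems(3)
  define I1 where "I1 = insert (z 0) (I - {b 0})"
  have H0: "b 0 \<in> I" "z 0 \<notin> I" "\<not> indep M (insert (z 0) I)" "indep M (insert (z 0) (I - {b 0}))"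
    using H by auto
  have I1i: "indep M I1" using H0 unfolding I1_def by blast
  have Hs: "b (Suc i) \<in> I" "z (Suc i) \<notin> I" "\<not> indep M (insert (z (Suc i)) I)"
     "indep M (insert (z (Suc i)) (I - {b (Suc i)}))" if "i < k" for i
    using H that by auto
  have T0: "\<not> indep M (insert (z (Suc i)) (I - {b 0}))" if "i < k" for i
    using T that by auto
  have bne: "b (Suc i) \<noteq> b 0" if "i < k" for i using Hs(4)[OF that] T0[OF that] by auto
  have zne: "z (Suc i) \<noteq> z 0" if "i < k" for i using Hs(4)[OF that] T0[OF that] H0(4) by auto
  have Dsub: "Dc (z (Suc i)) I \<subseteq> I1" if "i < k" for i
    using T0[OF that] unfolding Dc_def I1_def by blast
  have z1: "z (Suc i) \<notin> I1" if "i < k" for i using Hs(2)[OF that] zne[OF that] unfolding I1_def by blast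
  have d1: "\<not> indep M (insert (z (Suc i)) I1)" if "i < k" for i
  proof
    assume "indep M (insert (z (Suc i)) I1)"
    moreover have "insert (z (Suc i)) (I - {b 0}) \<subseteq> insert (z (Suc i)) I1" unfolding I1_def by blast
    ultimately show False using T0[OF that] m_mono by blast
  qed
  have DE: "Dc (z (Suc i)) I = Dc (z (Suc i)) I1" if "i < k" for i
    using deq[OF I Hs(2)[OF that] Hs(3)[OF that] I1i z1[OF that] d1[OF that] Dsub[OF that]] .
  have bI1: "b (Suc i) \<in> I1" if "i < k" for i using Hs(1)[OF that] bne[OF that] unfolding I1_def by blast
  have e1: "indep M (insert (z (Suc i)) (I1 - {b (Suc i)}))" if "i < k" for i
  proof -
    have "b (Suc i) \<in> Dc (z (Suc i)) I" using Hs(1,4)[OF that] unfolding Dc_def by blast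
    then have "b (Suc i) \<in> Dc (z (Suc i)) I1" using DE[OF that] by simp
    then show ?thesis unfolding Dc_def by blast
  qed
  have e2: "\<not> indep M (insert (z (Suc i)) (I1 - {b (Suc j)}))" if "i < k" "j < i" for i j
  proof -
    have "\<not> indep M (insert (z (Suc i)) (I - {b (Suc j)}))" using T that by auto
    then have "b (Suc j) \<notin> Dc (z (Suc i)) I" unfolding Dc_def by blast
    then have "b (Suc j) \<notin> Dc (z (Suc i)) I1" using DE[OF that(1)] by simp
    then show ?thesis using bI1[of j] that unfolding Dc_def by auto
  qed
  have IH: "indep M ((I1 - (b \<circ> Suc) ` {..<k}) \<union> (z \<circ> Suc) ` {..<k}) \<and>
    (\<forall>w. inc M I1 w \<longrightarrow> inc M ((I1 - (b \<circ> Suc) ` {..<k}) \<union> (z \<circ> Suc) ` {..<k}) w)"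
    apply (rule Suc.IH[OF I1i])
    using bI1 z1 d1 e1 e2 by auto
  have seq: "(I1 - (b \<circ> Suc) ` {..<k}) \<union> (z \<circ> Suc) ` {..<k} = (I - b ` {..<Suc k}) \<union> z ` {..<Suc k}"
  proof -
    have "z 0 \<notin> (b \<circ> Suc) ` {..<k}" using Hs(1) H0(2) by auto
    then show ?thesis unfolding I1_def lessThan_Suc_eq_insert_0 by auto
  qed
  have cl: "inc M I1 w" if "inc M I w" for w
  proof (rule inc_trans[OF I1i _ order_refl I that])
    fix x assume "x \<in> I"
    show "inc M I1 x"
    proof (cases "x = b 0")
      case True
      then have "insert x I1 = insert (z 0) I" using H0(1) unfolding I1_def by blast
      then show ?thesis using H0(3) unfolding inc_def by simp
    next
      case False then show ?thesis using \<open>x\<in>I\<close> unfolding inc_def I1_def by blast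
    qed
  qed
  show ?case using IH seq cl by metis
qed

end

lemma ground_dual[simp]: "ground (dual K) = ground K"
  unfolding dual_def ground_def by simp
lemma indep_dual: "indep (dual K) X \<longleftrightarrow> X \<subseteq> ground K \<and> (\<exists>B. basis K B \<and> X \<inter> B = {})"
  unfolding dual_def indep_def ground_def by simp
lemma ground_restrict[simp]: "ground (restrict K X) = X \<inter> ground K"
  unfolding restrict_def ground_def by simp
lemma indep_restrict: "indep (restrict K X) I \<longleftrightarrow> indep K I \<and> I \<subseteq> X"
  unfolding restrict_def indep_def by simp
lemma basis_restrict: "basis (restrict K X) J \<longleftrightarrow> mb K X J"
  unfolding basis_def mb_def indep_restrict by blast

lemma dual_basis:
  assumes "\<And>I. indep K I \<Longrightarrow> I \<subseteq> ground K"
  shows "basis (dual K) D \<longleftrightarrow> (\<exists>B. basis K B \<and> D = ground K - B)"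
proof
  assume D: "basis (dual K) D"
  then obtain B where B: "basis K B" "D \<inter> B = {}" "D \<subseteq> ground K"
    unfolding basis_def indep_dual by blast
  have "indep (dual K) (ground K - B)" unfolding indep_dual using B by blast
  moreover have "D \<subseteq> ground K - B" using B by blast
  ultimately have "ground K - B = D" using D unfolding basis_def by blast
  then show "\<exists>B. basis K B \<and> D = ground K - B" using B by blast
next
  assume "\<exists>B. basis K B \<and> D = ground K - B"
  then obtain B where B: "basis K B" "D = ground K - B" by blast
  have "indep (dual K) D" unfolding indep_dual using B by blast
  moreover have "I = D" if I: "indep (dual K) I" "D \<subseteq> I" for I
  proof -
    obtain B' where B': "basis K B'" "I \<inter> B' = {}" "I \<subseteq> ground K" using I unfolding indep_dual by blast
    have "B' \<subseteq> ground K" using assms B' unfolding basis_def by blast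
    then have "B' \<subseteq> B" using B' I B by blast
    then have "B' = B" using B' B unfolding basis_def by blast
    then show "I = D" using B B' I by blast
  qed
  ultimately show "basis (dual K) D" unfolding basis_def by blast
qed

lemma dd:
  assumes sub: "\<And>I. indep K I \<Longrightarrow> I \<subseteq> ground K"
    and mono: "\<And>I J. indep K J \<Longrightarrow> I \<subseteq> J \<Longrightarrow> indep K I"
    and ex: "\<And>I. indep K I \<Longrightarrow> \<exists>B. basis K B \<and> I \<subseteq> B"
  shows "dual (dual K) = K"
proof -
  have sub2: "\<And>B. basis K B \<Longrightarrow> B \<subseteq> ground K" using sub unfolding basis_def by blast
  have "indep (dual (dual K)) X \<longleftrightarrow> indep K X" for X
  proof -
    have "indep (dual (dual K)) X \<longleftrightarrow> X \<subseteq> ground K \<and> (\<exists>B. basis K B \<and> X \<inter> (ground K - B) = {})"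
      unfolding indep_dual[of "dual K"] dual_basis[of "dual K", OF indep_dual[THEN iffD1, THEN conjunct1]]
      by (simp add: dual_basis[OF sub]) blast
    also have "\<dots> \<longleftrightarrow> indep K X"
    proof
      assume "X \<subseteq> ground K \<and> (\<exists>B. basis K B \<and> X \<inter> (ground K - B) = {})"
      then obtain B where "basis K B" "X \<subseteq> B" by blast
      then show "indep K X" using mono unfolding basis_def by blast
    next
      assume "indep K X"
      then obtain B where "basis K B" "X \<subseteq> B" using ex by blast
      then show "X \<subseteq> ground K \<and> (\<exists>B. basis K B \<and> X \<inter> (ground K - B) = {})" using sub2 by blast
    qed
    finally show ?thesis .
  qed
  then have "snd (dual (dual K)) = snd K" unfolding indep_def by blast
  moreover have "fst (dual (dual K)) = fst K" using ground_dual unfolding ground_def by metis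
  ultimately show ?thesis by (simp add: prod_eq_iff)
qed

context fixes M :: "'a matroid" assumes mM: "matroid M" begin

lemma dualmax:
  assumes X: "X \<subseteq> ground M" and B': "basis M B'" and BX: "mb M X (B' \<inter> X)"
  shows "mb (dual M) (ground M - X) ((ground M - X) - B')"
proof -
  let ?E = "ground M"
  let ?D0 = "(?E - X) - B'"
  have D0i: "indep (dual M) ?D0" unfolding indep_dual using B' by blast
  have "K = ?D0" if K: "indep (dual M) K" "?D0 \<subseteq> K" "K \<subseteq> ?E - X" for K
  proof (rule ccontr)
    assume "K \<noteq> ?D0"
    then obtain b where b: "b \<in> K" "b \<notin> ?D0" using K(2) by blast
    have bB: "b \<in> B'" "b \<notin> X" using K(3) b by auto
    obtain B'' where B'': "basis M B''" "K \<inter> B'' = {}" using K(1) unfolding indep_dual by blast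
    define S where "S = B' - {b}"
    have B'i: "indep M B'" using B' unfolding basis_def by simp
    have Si: "indep M S" using m_mono[OF mM B'i] unfolding S_def by blast
    have "basis M S"
    proof (rule span[OF mM Si B''(1)])
      fix x assume x: "x \<in> B''" "x \<notin> S"
      have xE: "x \<in> ?E" using m_sub[OF mM] B''(1) x(1) unfolding basis_def by blast
      have xK: "x \<notin> K" using x(1) B''(2) by blast
      have xX: "x \<in> X" "x \<notin> B'"
      proof -
        show "x \<notin> B'" using xK x(2) b(1) unfolding S_def by blast
        then show "x \<in> X" using xE xK K(2) by blast
      qed
      have "\<not> indep M (insert x (B' \<inter> X))" using mbD[OF mM BX] xX by blast
      moreover have "insert x (B' \<inter> X) \<subseteq> insert x S" using bB(2) unfolding S_def by blast
      ultimately show "\<not> indep M (insert x S)" using m_mono[OF mM] by blast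
    qed
    then have "B' = S" using B'i unfolding basis_def S_def by blast
    then show False using bB(1) unfolding S_def by blast
  qed
  moreover have "?D0 \<subseteq> ?E - X" by blast
  ultimately show ?thesis unfolding mb_def using D0i by blast
qed

lemma ext:
  assumes X: "X \<subseteq> ground M" and I: "I \<subseteq> ground M - X" and B0: "basis M B0" "I \<inter> B0 = {}"
  shows "\<exists>B'. basis M B' \<and> mb M X (B' \<inter> X) \<and> I \<inter> B' = {}"
proof -
  obtain BX where BX: "mb M X BX" using m_max[OF mM m_empty[OF mM] _ X] by blast
  have s1: "BX \<subseteq> ground M - I" using BX X I mb_sub by blast
  obtain B' where B': "mb M (ground M - I) B'" "BX \<subseteq> B'"
    using m_max[OF mM mb_ind[OF BX] s1] by blast
  have B'i: "indep M B'" using mb_ind[OF B'(1)] .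
  have Bb: "basis M B'"
  proof (rule span[OF mM B'i B0(1)])
    fix x assume "x \<in> B0" "x \<notin> B'"
    moreover have "x \<in> ground M" using \<open>x\<in>B0\<close> B0(1) m_sub[OF mM] unfolding basis_def by blast
    ultimately show "\<not> indep M (insert x B')" using mbD[OF mM B'(1)] B0(2) by blast
  qed
  have "mb M X (B' \<inter> X)"
  proof (rule mbI[OF mM])
    show "indep M (B' \<inter> X)" using m_mono[OF mM B'i] by blast
    fix x assume x: "x \<in> X" "x \<notin> B' \<inter> X"
    then have "\<not> indep M (insert x BX)" using mbD[OF mM BX] B'(2) by blast
    moreover have "insert x BX \<subseteq> insert x (B' \<inter> X)" using B'(2) BX mb_sub by blast
    ultimately show "\<not> indep M (insert x (B' \<inter> X))" using m_mono[OF mM] by blast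
  qed auto
  moreover have "I \<inter> B' = {}" using mb_sub[OF B'(1)] by blast
  ultimately show ?thesis using Bb by blast
qed

lemma dr_basis:
  assumes X: "X \<subseteq> ground M"
  shows "mb (dual M) (ground M - X) D \<longleftrightarrow> (\<exists>B'. basis M B' \<and> mb M X (B' \<inter> X) \<and> D = (ground M - X) - B')"
proof
  assume D: "mb (dual M) (ground M - X) D"
  then obtain B0 where B0: "basis M B0" "D \<inter> B0 = {}" using mb_ind[of "dual M"] unfolding mb_def indep_dual by blast
  have DX: "D \<subseteq> ground M - X" using D unfolding mb_def by blast
  obtain B' where B': "basis M B'" "mb M X (B' \<inter> X)" "D \<inter> B' = {}" using ext[OF X DX B0] by blast
  have m: "mb (dual M) (ground M - X) ((ground M - X) - B')" using dualmax[OF X B'(1,2)] .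
  have "(ground M - X) - B' = D"
    using D m DX B'(3) unfolding mb_def by blast
  then show "\<exists>B'. basis M B' \<and> mb M X (B' \<inter> X) \<and> D = (ground M - X) - B'" using B' by metis
next
  assume "\<exists>B'. basis M B' \<and> mb M X (B' \<inter> X) \<and> D = (ground M - X) - B'"
  then show "mb (dual M) (ground M - X) D" using dualmax[OF X] by blast
qed

lemma ground_contract: "ground (contract M X) = ground M - X"
  unfolding contract_def by auto

lemma contract_indep:
  assumes X: "X \<subseteq> ground M"
  shows "indep (contract M X) I \<longleftrightarrow> I \<subseteq> ground M - X \<and> (\<exists>J. mb M X J \<and> indep M (I \<union> J))"
proof -
  have "indep (contract M X) I \<longleftrightarrow> I \<subseteq> ground M - X \<and>
     (\<exists>B'. basis M B' \<and> mb M X (B' \<inter> X) \<and> I \<inter> ((ground M - X) - B') = {})"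
    unfolding contract_def indep_dual basis_restrict dr_basis[OF X] by auto
  also have "\<dots> \<longleftrightarrow> I \<subseteq> ground M - X \<and> (\<exists>J. mb M X J \<and> indep M (I \<union> J))"
  proof (intro iffI conjI)
    assume a: "I \<subseteq> ground M - X \<and> (\<exists>B'. basis M B' \<and> mb M X (B' \<inter> X) \<and> I \<inter> ((ground M - X) - B') = {})"
    then obtain B' where B': "basis M B'" "mb M X (B' \<inter> X)" "I \<inter> ((ground M - X) - B') = {}" by blast
    have "I \<union> (B' \<inter> X) \<subseteq> B'" using a B'(3) by blast
    then have "indep M (I \<union> (B' \<inter> X))" using m_mono[OF mM] B'(1) unfolding basis_def by blast
    then show "\<exists>J. mb M X J \<and> indep M (I \<union> J)" using B'(2) by blast
    show "I \<subseteq> ground M - X" using a by blast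
  next
    assume a: "I \<subseteq> ground M - X \<and> (\<exists>J. mb M X J \<and> indep M (I \<union> J))"
    then obtain J where J: "mb M X J" "indep M (I \<union> J)" by blast
    obtain B' where B': "mb M (ground M) B'" "I \<union> J \<subseteq> B'"
      using m_max[OF mM J(2) m_sub[OF mM J(2)] order_refl] by blast
    have Bb: "basis M B'" using B'(1) basis_mb[OF mM] by blast
    have "mb M X (B' \<inter> X)"
    proof (rule mbI[OF mM])
      show "indep M (B' \<inter> X)" using m_mono[OF mM mb_ind[OF B'(1)]] by blast
      fix x assume x: "x \<in> X" "x \<notin> B' \<inter> X"
      then have "\<not> indep M (insert x J)" using mbD[OF mM J(1)] B'(2) by blast
      moreover have "insert x J \<subseteq> insert x (B' \<inter> X)" using B'(2) J(1) mb_sub by blast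
      ultimately show "\<not> indep M (insert x (B' \<inter> X))" using m_mono[OF mM] by blast
    qed auto
    then show "\<exists>B'. basis M B' \<and> mb M X (B' \<inter> X) \<and> I \<inter> ((ground M - X) - B') = {}"
      using a Bb B'(2) by blast
    show "I \<subseteq> ground M - X" using a by blast
  qed
  finally show ?thesis .
qed

lemma contr_all:
  assumes J: "mb M X J" and J': "mb M X J'" and IJ: "indep M (I \<union> J)" and IX: "I \<inter> X = {}"
  shows "indep M (I \<union> J')"
proof (rule ccontr)
  assume n: "\<not> indep M (I \<union> J')"
  have s: "I \<union> J' \<subseteq> ground M" using m_sub[OF mM IJ] m_sub[OF mM mb_ind[OF J']] by blast
  have s2: "J' \<subseteq> I \<union> J'" by blast
  obtain K where K: "mb M (I \<union> J') K" "J' \<subseteq> K" using m_max[OF mM mb_ind[OF J'] s2 s] by blast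
  have KI: "K \<subseteq> I \<union> J'" using mb_sub[OF K(1)] .
  have "K \<noteq> I \<union> J'" using n mb_ind[OF K(1)] by metis
  then obtain i where i: "i \<in> I" "i \<notin> K" using K(2) KI by blast
  have Ki: "\<not> indep M (insert i K)" by (rule mbD[OF mM K(1)]) (use i in blast)+
  define T where "T = (I - {i}) \<union> J"
  have Ti: "indep M T" by (rule m_mono[OF mM IJ]) (auto simp: T_def)
  have kT: "inc M T k" if k: "k \<in> K" for k
  proof (cases "k \<in> I")
    case True
    then have "k \<in> T" using k i unfolding T_def by blast
    then show ?thesis unfolding inc_def by blast
  next
    case False
    then have kJ': "k \<in> J'" using k KI by blast
    show ?thesis
    proof (cases "k \<in> J")
      case True then show ?thesis unfolding inc_def T_def by blast
    next
      case False
      have kX: "k \<in> X" using kJ' mb_sub[OF J'] by blast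
      have "\<not> indep M (insert k J)" using mbD[OF mM J kX False] .
      moreover have "insert k J \<subseteq> insert k T" unfolding T_def by blast
      ultimately show ?thesis using m_mono[OF mM] unfolding inc_def by blast
    qed
  qed
  have iK: "inc M K i" using Ki unfolding inc_def by blast
  have "inc M T i" using inc_trans[OF mM Ti kT order_refl mb_ind[OF K(1)] iK] .
  moreover have "i \<notin> T" using i IX mb_sub[OF J] unfolding T_def by blast
  moreover have "insert i T = I \<union> J" using i unfolding T_def by blast
  ultimately show False using IJ unfolding inc_def by simp
qed

end

lemma contract_to_contract:
  assumes mN: "matroid N" and gN: "ground N = E" and e: "e \<in> E" and W: "W \<subseteq> E - {e}"
  shows "contract_to (contract N {e}) W = contract N (E - W)"
proof -
  define R where "R = restrict (dual N) (E - {e})"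
  have Ne: "contract N {e} = dual R" unfolding contract_def R_def gN ..
  have gR: "ground R = E - {e}" unfolding R_def using gN by auto
  have iR: "indep R I \<longleftrightarrow> (I \<subseteq> E \<and> (\<exists>B. basis N B \<and> I \<inter> B = {})) \<and> I \<subseteq> E - {e}" for I
    unfolding R_def indep_restrict indep_dual gN ..
  have Xs: "{e} \<subseteq> ground N" using e gN by simp
  have "dual (dual R) = R"
  proof (rule dd)
    show "I \<subseteq> ground R" if "indep R I" for I using that unfolding iR gR by simp
    show "indep R I" if a: "indep R J" "I \<subseteq> J" for I J
    proof -
      obtain B where B: "basis N B" "J \<inter> B = {}" "J \<subseteq> E - {e}" using a(1) unfolding iR by blast
      have "I \<inter> B = {}" "I \<subseteq> E - {e}" using B a(2) by auto
      then show ?thesis unfolding iR using B(1) by blast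
    qed
    show "\<exists>B. basis R B \<and> I \<subseteq> B" if a: "indep R I" for I
    proof -
      obtain B0 where B0: "basis N B0" "I \<inter> B0 = {}" "I \<subseteq> E - {e}" using a unfolding iR by blast
      have I2: "I \<subseteq> ground N - {e}" using B0 gN by simp
      obtain B' where B': "basis N B'" "mb N {e} (B' \<inter> {e})" "I \<inter> B' = {}"
        using ext[OF mN Xs I2 B0(1,2)] by blast
      have "mb (dual N) (ground N - {e}) ((ground N - {e}) - B')" using dualmax[OF mN Xs B'(1,2)] .
      then have "basis R ((E - {e}) - B')" unfolding R_def basis_restrict gN .
      moreover have "I \<subseteq> (E - {e}) - B'" using B'(3) B0(3) by blast
      ultimately show ?thesis by blast
    qed
  qed
  have gNe: "ground (contract N {e}) = E - {e}" unfolding Ne ground_dual gR ..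
  have W2: "E - {e} - (E - {e} - W) = W" using W by blast
  have W3: "E - (E - W) = W" using W by blast
  have "restrict R W = restrict (dual N) W"
  proof -
    have "ground (restrict R W) = ground (restrict (dual N) W)"
      unfolding ground_restrict ground_dual gR gN using W by blast
    moreover have "indep (restrict R W) = indep (restrict (dual N) W)"
    proof
      fix I show "indep (restrict R W) I = indep (restrict (dual N) W) I"
        unfolding indep_restrict R_def using W by blast
    qed
    ultimately show ?thesis unfolding ground_def indep_def by (simp add: prod_eq_iff)
  qed
  moreover have "contract_to (contract N {e}) W = dual (restrict (dual (contract N {e})) W)"
    unfolding contract_to_def contract_def[of "contract N {e}"] gNe W2 ..
  moreover have "contract N (E - W) = dual (restrict (dual N) W)"
    unfolding contract_def[of N] gN W3 ..
  ultimately show ?thesis unfolding Ne \<open>dual (dual R) = R\<close> by simp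
qed

lemma rev_img: "(\<lambda>r. f (k - Suc r)) ` {..<k} = f ` {..<(k::nat)}"
proof -
  have "(\<lambda>r. k - Suc r) ` {..<k} = {..<k}"
  proof
    show "(\<lambda>r. k - Suc r) ` {..<k} \<subseteq> {..<k}" by auto
    show "{..<k} \<subseteq> (\<lambda>r. k - Suc r) ` {..<k}"
    proof
      fix x assume "x \<in> {..<k}"
      then have "x = k - Suc (k - Suc x)" "k - Suc x \<in> {..<k}" by auto
      then show "x \<in> (\<lambda>r. k - Suc r) ` {..<k}" by blast
    qed
  qed
  then show ?thesis by (metis image_image)
qed

lemma atMost_img: "f ` {..(k::nat)} = insert (f 0) ((\<lambda>i. f (Suc i)) ` {..<k})"
proof -
  have "{..k} = insert 0 (Suc ` {..<k})"
    by (simp only: lessThan_Suc_atMost[symmetric] lessThan_Suc_eq_insert_0)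
  then show ?thesis by auto
qed

lemma atMost_img2: "f ` {..(k::nat)} = insert (f k) (f ` {..<k})"
  by (simp add: lessThan_Suc_atMost[symmetric] lessThan_Suc)

lemma set_eq1: "z0 \<notin> BB \<Longrightarrow> (insert z0 B - BB) \<union> ZS = (B - BB) \<union> insert z0 ZS"
  by auto
lemma set_eq2: "zk \<notin> BB \<Longrightarrow> BB \<inter> J = {} \<Longrightarrow> (insert zk (B \<union> J) - BB) \<union> ZS = ((B - BB) \<union> insert zk ZS) \<union> J"
  by auto

lemma core:
  fixes M N :: "'a matroid"
  assumes mM: "matroid M" and mN: "matroid N" and gM: "ground M = E" and gN: "ground N = E"
    and loops: "\<And>A x. wave M N A \<Longrightarrow> x \<in> A \<Longrightarrow> \<not> indep M {x}"
    and rank0: "\<And>A J' x. wave M N A \<Longrightarrow> mb N (E - A) J' \<Longrightarrow> x \<in> A \<Longrightarrow> \<not> indep N (insert x J')"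
    and WE: "W \<subseteq> E" and J: "mb N (E - W) J" and BJ: "indep N (B \<union> J)" and BW: "B \<subseteq> W"
    and Je: "Je \<subseteq> {e}" "e \<notin> W" and BJe: "indep M (B \<union> Je)"
    and maxe: "\<And>w. w \<in> W \<Longrightarrow> w \<notin> B \<Longrightarrow> \<not> indep M (insert w (B \<union> Je))"
    and x: "x \<in> W" "x \<notin> B"
  shows "\<not> indep N (insert x (B \<union> J))"
proof -
  have Bi: "indep M B" by (rule m_mono[OF mM BJe]) blast
  have JW: "J \<subseteq> E - W" using mb_sub[OF J] .
  have BJd: "B \<inter> J = {}" using JW BW by blast
  define Y where "Y = {y \<in> W - B. indep M (insert y B)}"
  define X where "X = {x \<in> W - B. indep N (insert x (B \<union> J))}"
  define eN where "eN z b \<longleftrightarrow> z \<in> W - B \<and> b \<in> B \<and> indep N (insert z ((B - {b}) \<union> J))" for z b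
  define eM where "eM b z \<longleftrightarrow> b \<in> B \<and> z \<in> W - B \<and> indep M (insert z (B - {b}))" for b z
  define chain where "chain k zz bb \<longleftrightarrow> zz 0 \<in> Y \<and> (\<forall>i<k. eN (zz i) (bb i) \<and> eM (bb i) (zz (Suc i)))"
    for k :: nat and zz bb :: "nat \<Rightarrow> 'a"
  define RW where "RW = {v. \<exists>k zz bb. chain k zz bb \<and> v = zz k}"
  define RB where "RB = {v. \<exists>k zz bb. chain k zz bb \<and> eN (zz k) v}"
  have chW: "zz n \<in> W - B" if "chain k zz bb" "n \<le> k" for k zz bb n
  proof (cases n)
    case 0 then show ?thesis using that unfolding chain_def Y_def by auto
  next
    case (Suc m) then show ?thesis using that unfolding chain_def eM_def by auto
  qed
  have RWs: "RW \<subseteq> W - B" unfolding RW_def using chW by blast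
  have RBs: "RB \<subseteq> B" unfolding RB_def eN_def by blast
  have YR: "Y \<subseteq> RW"
  proof
    fix y assume "y \<in> Y"
    then have "chain 0 (\<lambda>_. y) (\<lambda>_. y)" unfolding chain_def by simp
    then show "y \<in> RW" unfolding RW_def by blast
  qed
  have clM: "z \<in> RW" if bR: "b \<in> RB" and ebz: "eM b z" for b z
  proof -
    obtain k zz bb where c: "chain k zz bb" "eN (zz k) b" using bR unfolding RB_def by blast
    define zz' where "zz' = zz(Suc k := z)"
    define bb' where "bb' = bb(k := b)"
    have "chain (Suc k) zz' bb'"
      unfolding chain_def
    proof (intro conjI allI impI)
      show "zz' 0 \<in> Y" using c(1) unfolding zz'_def chain_def by simp
      fix i assume i: "i < Suc k"
      show "eN (zz' i) (bb' i)"
      proof (cases "i = k")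
        case True then show ?thesis using c(2) unfolding zz'_def bb'_def by simp
      next
        case False then show ?thesis using c(1) i unfolding zz'_def bb'_def chain_def by simp
      qed
      show "eM (bb' i) (zz' (Suc i))"
      proof (cases "i = k")
        case True then show ?thesis using ebz unfolding zz'_def bb'_def by simp
      next
        case False then show ?thesis using c(1) i unfolding zz'_def bb'_def chain_def by simp
      qed
    qed
    moreover have "zz' (Suc k) = z" unfolding zz'_def by simp
    ultimately have "\<exists>k zz bb. chain k zz bb \<and> z = zz k" by metis
    then show ?thesis unfolding RW_def by (rule CollectI)
  qed
  have clN: "b \<in> RB" if zR: "z \<in> RW" and ezb: "eN z b" for z b
  proof -
    obtain k zz bb where "chain k zz bb" "z = zz k" using zR unfolding RW_def by blast
    then have "\<exists>k zz bb. chain k zz bb \<and> eN (zz k) b" using ezb by blast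
    then show ?thesis unfolding RB_def by (rule CollectI)
  qed
  show ?thesis
  proof (cases "RW \<inter> X = {}")
    case True
    define A where "A = W - (RW \<union> RB)"
    have AW: "A \<subseteq> W" unfolding A_def by blast
    have m1: "mb M A (B \<inter> A)"
    proof (rule mbI[OF mM])
      show "indep M (B \<inter> A)" by (rule m_mono[OF mM Bi]) blast
      show "B \<inter> A \<subseteq> A" by blast
      fix z assume z: "z \<in> A" "z \<notin> B \<inter> A"
      have zB: "z \<notin> B" "z \<in> W" using z AW by auto
      have "z \<notin> RW" using z unfolding A_def by blast
      then have "z \<notin> Y" using YR by blast
      then have zd: "\<not> indep M (insert z B)" using zB unfolding Y_def by blast
      have "Dc M z B \<subseteq> B \<inter> A"
      proof
        fix y assume y: "y \<in> Dc M z B"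
        then have yB: "y \<in> B" "indep M (insert z (B - {y}))" unfolding Dc_def[OF mM] by auto
        then have "eM y z" unfolding eM_def using zB by blast
        then have "y \<notin> RB" using clM \<open>z \<notin> RW\<close> by blast
        moreover have "y \<notin> RW" using RWs yB by blast
        ultimately show "y \<in> B \<inter> A" using yB BW unfolding A_def by blast
      qed
      then show "\<not> indep M (insert z (B \<inter> A))" using circ[OF mM Bi zB(1) zd] by blast
    qed
    define J' where "J' = J \<union> (B \<inter> RB)"
    have J'i: "indep N J'" by (rule m_mono[OF mN BJ]) (auto simp: J'_def)
    have m2: "mb N (E - A) J'"
    proof (rule mbI[OF mN J'i])
      show "J' \<subseteq> E - A" using JW BW WE unfolding J'_def A_def by blast
      fix k assume k: "k \<in> E - A" "k \<notin> J'"
      show "\<not> indep N (insert k J')"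
      proof (cases "k \<in> W")
        case False
        then have "\<not> indep N (insert k J)" using mbD[OF mN J] k unfolding J'_def by blast
        moreover have "insert k J \<subseteq> insert k J'" unfolding J'_def by blast
        ultimately show ?thesis using m_mono[OF mN] by blast
      next
        case kW: True
        have "k \<in> RW" using k kW RBs unfolding A_def J'_def by blast
        then have kWB: "k \<in> W - B" and kX: "k \<notin> X" using RWs True by auto
        then have kd: "\<not> indep N (insert k (B \<union> J))" unfolding X_def by blast
        have kn: "k \<notin> B \<union> J" using kWB JW by blast
        have "Dc N k (B \<union> J) \<subseteq> J'"
        proof
          fix y assume y: "y \<in> Dc N k (B \<union> J)"
          then have y1: "y \<in> B \<union> J" "indep N (insert k ((B \<union> J) - {y}))" unfolding Dc_def[OF mN] by auto
          show "y \<in> J'"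
          proof (cases "y \<in> J")
            case True then show ?thesis unfolding J'_def by blast
          next
            case False
            then have yB: "y \<in> B" using y1 by blast
            have "(B \<union> J) - {y} = (B - {y}) \<union> J" using False by blast
            then have "eN k y" unfolding eN_def using y1 kWB yB by simp
            then have "y \<in> RB" using clN \<open>k \<in> RW\<close> by blast
            then show ?thesis using yB unfolding J'_def by blast
          qed
        qed
        moreover have "J' \<subseteq> B \<union> J" unfolding J'_def by blast
        ultimately show ?thesis using circ[OF mN BJ kn kd] by blast
      qed
    qed
    have wA: "wave M N A"
      unfolding wave_def
    proof (intro conjI exI)
      show "A \<subseteq> ground M" using AW WE gM by blast
      show "basis (restrict M A) (B \<inter> A)" unfolding basis_restrict using m1 .
      have "contract_to N A = contract N (E - A)" unfolding contract_to_def gN ..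
      moreover have "indep (contract N (E - A)) (B \<inter> A)"
      proof -
        have EA: "E - A \<subseteq> ground N" using gN by blast
        have "B \<inter> A \<subseteq> ground N - (E - A)" using AW WE gN by blast
        moreover have "indep N (B \<inter> A \<union> J')" by (rule m_mono[OF mN BJ]) (auto simp: J'_def)
        ultimately show ?thesis unfolding contract_indep[OF mN EA] using m2 by blast
      qed
      ultimately show "indep (contract_to N A) (B \<inter> A)" by simp
    qed
    have BA: "B \<inter> A = {}"
    proof (rule ccontr)
      assume "B \<inter> A \<noteq> {}"
      then obtain b where b: "b \<in> B" "b \<in> A" by blast
      have "indep M {b}" by (rule m_mono[OF mM Bi]) (use b in blast)
      then show False using loops[OF wA b(2)] by blast
    qed
    show ?thesis
    proof (cases "x \<in> RW")
      case True
      then have "x \<notin> X" using \<open>RW \<inter> X = {}\<close> by blast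
      then show ?thesis using x unfolding X_def by blast
    next
      case False
      then have xA: "x \<in> A" using x RBs unfolding A_def by blast
      have "B \<subseteq> RB" using BA BW RWs unfolding A_def by blast
      then have "J' = B \<union> J" unfolding J'_def by blast
      then show ?thesis using rank0[OF wA m2 xA] by simp
    qed
  next
    case False
    then obtain v where "v \<in> RW" "v \<in> X" by blast
    define P where "P k \<longleftrightarrow> (\<exists>zz bb. chain k zz bb \<and> zz k \<in> X)" for k
    have "\<exists>k. P k" using \<open>v \<in> RW\<close> \<open>v \<in> X\<close> unfolding RW_def P_def by blast
    then obtain k where Pk: "P k" and minP: "\<And>m. m < k \<Longrightarrow> \<not> P m" unfolding exists_least_iff[of P] by blast
    obtain zz bb where c: "chain k zz bb" "zz k \<in> X" using Pk unfolding P_def by blast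
    have short: "False" if "chain k' zz' bb'" "zz' k' \<in> X" "k' < k" for k' zz' bb'
      using minP[OF that(3)] that(1,2) unfolding P_def by blast
    have cz: "zz n \<in> W - B" if "n \<le> k" for n using chW[OF c(1) that] .
    have eNi: "eN (zz i) (bb i)" if "i < k" for i using c(1) that unfolding chain_def by blast
    have eMi: "eM (bb i) (zz (Suc i))" if "i < k" for i using c(1) that unfolding chain_def by blast
    have bB: "bb i \<in> B" if "i < k" for i using eNi[OF that] unfolding eN_def by blast
    have z0Y: "zz 0 \<in> Y" using c(1) unfolding chain_def by blast
    have nY: "zz i \<notin> Y" if "0 < i" "i \<le> k" for i
    proof
      assume zY: "zz i \<in> Y"
      have "chain (k - i) (\<lambda>n. zz (n + i)) (\<lambda>n. bb (n + i))"
        unfolding chain_def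
      proof (intro conjI allI impI)
        show "zz (0 + i) \<in> Y" using zY by simp
        fix n assume n: "n < k - i"
        then have "n + i < k" by simp
        then show "eN (zz (n + i)) (bb (n + i))" "eM (bb (n + i)) (zz (Suc n + i))"
          using eNi eMi by auto
      qed
      moreover have "zz (k - i + i) \<in> X" using c(2) that by simp
      ultimately show False using short that by fastforce
    qed
    have nX: "zz i \<notin> X" if "i < k" for i
    proof
      assume "zz i \<in> X"
      moreover have "chain i zz bb" using c(1) that unfolding chain_def by simp
      ultimately show False using short that by blast
    qed
    have nM: "\<not> eM (bb j) (zz i)" if ji: "j < k" "Suc j < i" "i \<le> k" for i j
    proof
      assume e: "eM (bb j) (zz i)"
      define s where "s = i - Suc j"
      define zz' where "zz' n = (if n \<le> j then zz n else zz (n + s))" for n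
      define bb' where "bb' n = (if n \<le> j then bb n else bb (n + s))" for n
      have "chain (k - s) zz' bb'"
        unfolding chain_def
      proof (intro conjI allI impI)
        show "zz' 0 \<in> Y" using z0Y unfolding zz'_def by simp
        fix n assume n: "n < k - s"
        show "eN (zz' n) (bb' n)"
        proof (cases "n \<le> j")
          case True then show ?thesis using eNi[of n] ji unfolding zz'_def bb'_def by simp
        next
          case False then show ?thesis using eNi[of "n + s"] n ji unfolding zz'_def bb'_def s_def by simp
        qed
        show "eM (bb' n) (zz' (Suc n))"
        proof (cases "n < j")
          case True then show ?thesis using eMi[of n] ji unfolding zz'_def bb'_def by simp
        next
          case False
          show ?thesis
          proof (cases "n = j")
            case True
            have "Suc j + s = i" using ji unfolding s_def by simp
            then show ?thesis using e True unfolding zz'_def bb'_def by simp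
          next
            case False
            then have "n > j" using \<open>\<not> n < j\<close> by simp
            then show ?thesis using eMi[of "n + s"] n ji unfolding zz'_def bb'_def s_def by simp
          qed
        qed
      qed
      moreover have "zz' (k - s) = zz k" using ji unfolding zz'_def s_def by simp
      ultimately show False using short c(2) ji unfolding s_def by fastforce
    qed
    have nN: "\<not> eN (zz i) (bb j)" if ij: "i < j" "j < k" for i j
    proof
      assume e: "eN (zz i) (bb j)"
      define s where "s = j - i"
      define zz' where "zz' n = (if n \<le> i then zz n else zz (n + s))" for n
      define bb' where "bb' n = (if n < i then bb n else bb (n + s))" for n
      have "chain (k - s) zz' bb'"
        unfolding chain_def
      proof (intro conjI allI impI)
        show "zz' 0 \<in> Y" using z0Y unfolding zz'_def by simp
        fix n assume n: "n < k - s"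
        show "eN (zz' n) (bb' n)"
        proof (cases "n < i")
          case True then show ?thesis using eNi[of n] ij unfolding zz'_def bb'_def by simp
        next
          case False
          show ?thesis
          proof (cases "n = i")
            case True
            have "i + s = j" using ij unfolding s_def by simp
            then show ?thesis using e True unfolding zz'_def bb'_def by simp
          next
            case False
            then have "n > i" using \<open>\<not> n < i\<close> by simp
            then show ?thesis using eNi[of "n + s"] n ij unfolding zz'_def bb'_def s_def by simp
          qed
        qed
        show "eM (bb' n) (zz' (Suc n))"
        proof (cases "n < i")
          case True then show ?thesis using eMi[of n] ij unfolding zz'_def bb'_def by simp
        next
          case False then show ?thesis using eMi[of "n + s"] n ij unfolding zz'_def bb'_def s_def by simp
        qed
      qed
      moreover have "zz' (k - s) = zz k" using ij unfolding zz'_def s_def by simp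
      ultimately show False using short c(2) ij unfolding s_def by fastforce
    qed
    define I' where "I' = insert (zz 0) B"
    have I'i: "indep M I'" using z0Y unfolding Y_def I'_def by blast
    have z0B: "zz 0 \<notin> B" using z0Y unfolding Y_def by blast
    have triM: "indep M ((I' - bb ` {..<k}) \<union> (\<lambda>i. zz (Suc i)) ` {..<k}) \<and>
      (\<forall>w. inc M I' w \<longrightarrow> inc M ((I' - bb ` {..<k}) \<union> (\<lambda>i. zz (Suc i)) ` {..<k}) w)"
    proof (rule tri[OF mM I'i]; intro allI impI conjI)
      fix i assume i: "i < k"
      let ?z = "zz (Suc i)"
      have zW: "?z \<in> W - B" using cz i by simp
      have zY: "?z \<notin> Y" using nY i by simp
      have zd: "\<not> indep M (insert ?z B)" using zW zY unfolding Y_def by blast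
      have zI': "?z \<notin> I'" using zW zY z0Y unfolding I'_def by auto
      have zdI': "\<not> indep M (insert ?z I')"
      proof
        assume "indep M (insert ?z I')"
        moreover have "insert ?z B \<subseteq> insert ?z I'" unfolding I'_def by blast
        ultimately show False using zd m_mono[OF mM] by blast
      qed
      have DE: "Dc M ?z B = Dc M ?z I'"
        by (rule deq[OF mM Bi _ zd I'i zI' zdI']) (use zW Dc_sub[OF mM, of ?z B] in \<open>auto simp: I'_def\<close>)
      show "bb i \<in> I'" using bB i unfolding I'_def by blast
      show "?z \<notin> I'" using zI' .
      show "\<not> indep M (insert ?z I')" using zdI' .
      have "bb i \<in> Dc M ?z B" using eMi[OF i] unfolding eM_def Dc_def[OF mM] by blast
      then have "bb i \<in> Dc M ?z I'" using DE by simp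
      then show "indep M (insert ?z (I' - {bb i}))" unfolding Dc_def[OF mM] by blast
      fix j assume j: "j < i"
      have "\<not> eM (bb j) ?z" using nM[of j "Suc i"] i j by simp
      then have "\<not> indep M (insert ?z (B - {bb j}))" using bB[of j] i j zW unfolding eM_def by simp
      then have "bb j \<notin> Dc M ?z B" unfolding Dc_def[OF mM] by blast
      then have "bb j \<notin> Dc M ?z I'" using DE by simp
      moreover have "bb j \<in> I'" using bB[of j] i j unfolding I'_def by simp
      ultimately show "\<not> indep M (insert ?z (I' - {bb j}))" unfolding Dc_def[OF mM] by blast
    qed
    define I'' where "I'' = insert (zz k) (B \<union> J)"
    have I''i: "indep N I''" using c(2) unfolding X_def I''_def by blast
    have zkB: "zz k \<notin> B" using c(2) unfolding X_def by blast
    have triN: "indep N ((I'' - (\<lambda>r. bb (k - Suc r)) ` {..<k}) \<union> (\<lambda>r. zz (k - Suc r)) ` {..<k})"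
    proof -
      have "indep N ((I'' - (\<lambda>r. bb (k - Suc r)) ` {..<k}) \<union> (\<lambda>r. zz (k - Suc r)) ` {..<k}) \<and>
        (\<forall>w. inc N I'' w \<longrightarrow> inc N ((I'' - (\<lambda>r. bb (k - Suc r)) ` {..<k}) \<union> (\<lambda>r. zz (k - Suc r)) ` {..<k}) w)"
      proof (rule tri[OF mN I''i]; intro allI impI conjI)
        fix r assume r: "r < k"
        define m where "m = k - Suc r"
        have m: "m < k" using r unfolding m_def by simp
        let ?z = "zz m"
        have zW: "?z \<in> W - B" using cz m by simp
        have zX: "?z \<notin> X" using nX m by simp
        have zd: "\<not> indep N (insert ?z (B \<union> J))" using zW zX unfolding X_def by blast
        have zBJ: "?z \<notin> B \<union> J" using zW JW by blast
        have zI'': "?z \<notin> I''" using zBJ zX c(2) unfolding I''_def by auto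
        have zdI'': "\<not> indep N (insert ?z I'')"
        proof
          assume "indep N (insert ?z I'')"
          moreover have "insert ?z (B \<union> J) \<subseteq> insert ?z I''" unfolding I''_def by blast
          ultimately show False using zd m_mono[OF mN] by blast
        qed
        have DE: "Dc N ?z (B \<union> J) = Dc N ?z I''"
          by (rule deq[OF mN BJ zBJ zd I''i zI'' zdI'']) (use Dc_sub[OF mN, of ?z "B \<union> J"] in \<open>auto simp: I''_def\<close>)
        have bm: "bb m \<in> B" using bB m by simp
        show "bb (k - Suc r) \<in> I''" using bm unfolding I''_def m_def by blast
        show "zz (k - Suc r) \<notin> I''" using zI'' unfolding m_def .
        show "\<not> indep N (insert (zz (k - Suc r)) I'')" using zdI'' unfolding m_def .
        have "(B - {bb m}) \<union> J = (B \<union> J) - {bb m}" using bm BJd by blast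
        then have "indep N (insert ?z ((B \<union> J) - {bb m}))" using eNi[OF m] unfolding eN_def by simp
        then have "bb m \<in> Dc N ?z (B \<union> J)" using bm unfolding Dc_def[OF mN] by blast
        then have "bb m \<in> Dc N ?z I''" using DE by simp
        then show "indep N (insert (zz (k - Suc r)) (I'' - {bb (k - Suc r)}))" unfolding Dc_def[OF mN] m_def by blast
        fix j assume j: "j < r"
        define m' where "m' = k - Suc j"
        have mm: "m < m'" "m' < k" using r j unfolding m_def m'_def by auto
        have bm': "bb m' \<in> B" using bB mm by simp
        have "\<not> eN ?z (bb m')" using nN[OF mm] .
        then have "\<not> indep N (insert ?z ((B - {bb m'}) \<union> J))" using zW bm' unfolding eN_def by blast
        moreover have "(B - {bb m'}) \<union> J = (B \<union> J) - {bb m'}" using bm' BJd by blast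
        ultimately have "\<not> indep N (insert ?z ((B \<union> J) - {bb m'}))" by simp
        then have "bb m' \<notin> Dc N ?z (B \<union> J)" unfolding Dc_def[OF mN] by blast
        then have "bb m' \<notin> Dc N ?z I''" using DE by simp
        moreover have "bb m' \<in> I''" using bm' unfolding I''_def by blast
        ultimately show "\<not> indep N (insert (zz (k - Suc r)) (I'' - {bb (k - Suc j)}))"
          unfolding Dc_def[OF mN] m_def m'_def by blast
      qed
      then show ?thesis by blast
    qed
    define B' where "B' = (B - bb ` {..<k}) \<union> zz ` {..k}"
    have bbB: "bb ` {..<k} \<subseteq> B" using bB by blast
    have zzW: "zz ` {..k} \<subseteq> W - B" using cz by blast
    have E1: "(I' - bb ` {..<k}) \<union> (\<lambda>i. zz (Suc i)) ` {..<k} = B'"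
    proof -
      have z0n: "zz 0 \<notin> bb ` {..<k}" using z0B bbB by blast
      show ?thesis unfolding B'_def I'_def atMost_img[of zz k] using set_eq1[OF z0n] .
    qed
    have E2: "(I'' - (\<lambda>r. bb (k - Suc r)) ` {..<k}) \<union> (\<lambda>r. zz (k - Suc r)) ` {..<k} = B' \<union> J"
    proof -
      have zkn: "zz k \<notin> bb ` {..<k}" using zkB bbB by blast
      have bJ: "bb ` {..<k} \<inter> J = {}" using bbB BJd by blast
      show ?thesis unfolding B'_def I''_def atMost_img2[of zz k] rev_img using set_eq2[OF zkn bJ] .
    qed
    have B'M: "indep M B'" using triM unfolding E1 by blast
    have B'N: "indep N (B' \<union> J)" using triN unfolding E2 .
    have clB': "inc M B' w" if "inc M I' w" for w using triM that unfolding E1 by blast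
    have B'W: "B' \<subseteq> W" unfolding B'_def using zzW BW by blast
    have mbB': "mb M W B'"
    proof (rule mbI[OF mM B'M B'W])
      fix w assume w: "w \<in> W" "w \<notin> B'"
      have "inc M B' w"
      proof (rule inc_trans[OF mM B'M _ _ BJe])
        show "B \<union> Je \<subseteq> I' \<union> Je" unfolding I'_def by blast
        show "inc M (B \<union> Je) w" using maxe[OF w(1)] unfolding inc_def by blast
        fix q assume q: "q \<in> I' \<union> Je"
        show "inc M B' q"
        proof (cases "q \<in> I'")
          case True then show ?thesis using clB' unfolding inc_def by blast
        next
          case False
          then have qJ: "q \<in> Je" using q by blast
          then have "Je = {q}" using Je(1) by blast
          then have "insert q I' = insert (zz 0) (B \<union> Je)" unfolding I'_def by blast
          moreover have "\<not> indep M (insert (zz 0) (B \<union> Je))" using maxe z0B cz[of 0] by simp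
          ultimately have "inc M I' q" unfolding inc_def by simp
          then show ?thesis using clB' by blast
        qed
      qed
      then show "\<not> indep M (insert w B')" using w(2) unfolding inc_def by blast
    qed
    have wW: "wave M N W"
      unfolding wave_def
    proof (intro conjI exI)
      show "W \<subseteq> ground M" using WE gM by blast
      show "basis (restrict M W) B'" unfolding basis_restrict using mbB' .
      have EW: "E - W \<subseteq> ground N" using gN by blast
      have "contract_to N W = contract N (E - W)" unfolding contract_to_def gN ..
      moreover have "indep (contract N (E - W)) B'"
        unfolding contract_indep[OF mN EW] using B'W WE gN J B'N by blast
      ultimately show "indep (contract_to N W) B'" by simp
    qed
    have "indep M {zz 0}" by (rule m_mono[OF mM I'i]) (simp add: I'_def)
    moreover have "zz 0 \<in> W" using cz[of 0] by simp
    ultimately show ?thesis using loops[OF wW] by blast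
  qed
qed

theorem mainTheorem7:
  fixes M N :: "'a matroid" and E W B :: "'a set" and e :: 'a
  assumes "matroid M" and "matroid N"
    and "ground M = E" and "ground N = E"
    and "cond_plus M N"
    and "e \<in> E"
    and "W \<subseteq> E - {e}"
    and "wave (contract M {e}) (contract N {e}) W"
    and "B \<subseteq> W"
    and "basis (restrict (contract M {e}) W) B"
    and "indep (contract_to (contract N {e}) W) B"
  shows "B \<in> common_bases (contract M {e}) (contract N {e}) W"
proof -
  note mM = assms(1) and mN = assms(2) and gM = assms(3) and gN = assms(4) and cp = assms(5)
    and eE = assms(6) and WE' = assms(7) and BW = assms(9) and HB = assms(10) and HBN = assms(11)
  have WE: "W \<subseteq> E" using WE' by blast
  have eW: "e \<notin> W" using WE' by blast
  have CC: "contract_to (contract N {e}) W = contract N (E - W)"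
    using contract_to_contract[OF mN gN eE WE'] .
  have EW: "E - W \<subseteq> ground N" using gN by blast
  have EWW: "ground N - (E - W) = W" using gN WE by blast
  have eG: "{e} \<subseteq> ground M" using eE gM by blast
  obtain Je where Je: "mb M {e} Je" using m_max[OF mM m_empty[OF mM] _ eG] by blast
  have Jee: "Je \<subseteq> {e}" using mb_sub[OF Je] .
  have Bmb: "mb (contract M {e}) W B" using HB unfolding basis_restrict .
  have Bi: "indep (contract M {e}) B" using mb_ind[OF Bmb] .
  then obtain Je' where Je': "mb M {e} Je'" "indep M (B \<union> Je')" and BE: "B \<subseteq> ground M - {e}"
    unfolding contract_indep[OF mM eG] by blast
  have BJe: "indep M (B \<union> Je)" using contr_all[OF mM Je'(1) Je Je'(2)] BE by blast
  have maxe: "\<not> indep M (insert w (B \<union> Je))" if w: "w \<in> W" "w \<notin> B" for w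
  proof
    assume a: "indep M (insert w (B \<union> Je))"
    have "insert w B \<subseteq> ground M - {e}" using BE w WE' gM by blast
    moreover have "insert w B \<union> Je = insert w (B \<union> Je)" by blast
    ultimately have "indep (contract M {e}) (insert w B)"
      unfolding contract_indep[OF mM eG] using Je a by metis
    moreover have "B \<subseteq> insert w B" "insert w B \<subseteq> W" using BW w by auto
    ultimately have "insert w B = B" using Bmb unfolding mb_def by blast
    then show False using w by blast
  qed
  have "indep (contract N (E - W)) B" using HBN CC by simp
  then obtain J where J: "mb N (E - W) J" "indep N (B \<union> J)"
    unfolding contract_indep[OF mN EW] by blast
  define U where "U = wave_union M N"
  have waveU: "A \<subseteq> U" if "wave M N A" for A using that unfolding U_def wave_union_def by blast
  have UE: "U \<subseteq> E" unfolding U_def wave_union_def wave_def gM by blast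
  have loops: "\<not> indep M {x}" if "wave M N A" "x \<in> A" for A x
  proof -
    have "x \<in> U" using waveU[OF that(1)] that(2) by blast
    then have "loop M x" using cp unfolding cond_plus_def U_def by blast
    then show ?thesis unfolding loop_def by blast
  qed
  have rank0: "\<not> indep N (insert x J')" if wA: "wave M N A" and J': "mb N (E - A) J'" and xA: "x \<in> A" for A J' x
  proof
    assume a: "indep N (insert x J')"
    have AU: "A \<subseteq> U" using waveU[OF wA] .
    have EU: "E - U \<subseteq> ground N" using gN by blast
    obtain J0 where J0: "mb N (E - U) J0" using m_max[OF mN m_empty[OF mN] _ EU] by blast
    have s1: "J0 \<subseteq> E - A" using mb_sub[OF J0] AU by blast
    have s2: "E - A \<subseteq> ground N" using gN by blast
    obtain J1 where J1: "mb N (E - A) J1" "J0 \<subseteq> J1" using m_max[OF mN mb_ind[OF J0] s1 s2] by blast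
    have "indep N ({x} \<union> J')" using a by simp
    then have "indep N ({x} \<union> J1)" using contr_all[OF mN J' J1(1)] xA by blast
    then have x0: "indep N ({x} \<union> J0)" by (rule m_mono[OF mN]) (use J1(2) in blast)
    have "{x} \<subseteq> ground N - (E - U)" using xA AU UE gN by blast
    then have "indep (contract N (E - U)) {x}" unfolding contract_indep[OF mN EU] using J0 x0 by blast
    moreover have "basis (contract N (E - U)) {}" using cp unfolding cond_plus_def contract_to_def gN U_def by simp
    ultimately show False unfolding basis_def by blast
  qed
  have core': "\<not> indep N (insert x (B \<union> J))" if "x \<in> W" "x \<notin> B" for x
    by (rule core[OF mM mN gM gN loops rank0 WE J(1) J(2) BW Jee eW BJe maxe that])
  have "basis (contract N (E - W)) B"
    unfolding basis_def
  proof (intro conjI allI impI)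
    show "indep (contract N (E - W)) B" using HBN CC by simp
    fix I assume I: "indep (contract N (E - W)) I \<and> B \<subseteq> I"
    then obtain J'' where J'': "mb N (E - W) J''" "indep N (I \<union> J'')" and IW: "I \<subseteq> W"
      unfolding contract_indep[OF mN EW] EWW by blast
    have IJ: "indep N (I \<union> J)" using contr_all[OF mN J''(1) J(1) J''(2)] IW by blast
    show "I = B"
    proof (rule ccontr)
      assume "I \<noteq> B"
      then obtain x where x: "x \<in> I" "x \<notin> B" using I by blast
      have "indep N (insert x (B \<union> J))" by (rule m_mono[OF mN IJ]) (use x I in blast)
      then show False using core' x IW by blast
    qed
  qed
  then show ?thesis unfolding common_bases_def using HB CC by simp
qed

end
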